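(* Let $(\mu_z^\varepsilon)$ be a random walk on $\mathcal G$ of the form $\mu_z^\varepsilon=\delta_z+\varepsilon\mu_z$ for $\varepsilon\in[0,1]$, where each $\mu_z$ is a signed measure on $V$ of total mass zero with finite first moment. Then for every pair of distinct vertices $x,y$ the limit ${}^{\mathcal O}\mathrm{Ric}(x,y)=\lim_{\varepsilon\downarrow0}\varepsilon^{-1}\,{}^{\mathcal O}\mathrm{Ric}_\varepsilon(x,y)$ exists.
   Context: $\mathcal G$ is a locally finite graph with vertex set $V$, $\mathrm d$ a distance on $V$ with $(V,\mathrm d)$ complete. A random walk is a family of probability measures $\mu_z^\varepsilon$ on $V$ ($z\in V$, $\varepsilon\in[0,1]$) with finite first moments, continuous in $\varepsilon$, $\mu_z^0=\delta_z$ (so here $\delta_z+\varepsilon\mu_z$ is assumed to be a probability measure for each $\varepsilon\in[0,1]$). ${}^{\mathcal O}\mathrm{Ric}_\varepsilon(x,y):=1-\mathcal W_1(\mu_x^\varepsilon,\mu_y^\varepsilon)/\mathrm d(x,y)$, with $\mathcal W_1$ the $L^1$-Wasserstein distance w.r.t. $\mathrm d$. *)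

theory Defs
  imports "HOL-Analysis.Analysis"
begin

definition locally_finite_graph :: "'v set \<Rightarrow> ('v \<Rightarrow> 'v \<Rightarrow> bool) \<Rightarrow> bool" where
  "locally_finite_graph V E \<longleftrightarrow>
     (\<forall>x y. E x y \<longrightarrow> x \<in> V \<and> y \<in> V) \<and> (\<forall>x y. E x y \<longrightarrow> E y x) \<and>
     (\<forall>x\<in>V. finite {y \<in> V. E x y})"

definition is_distance :: "'v set \<Rightarrow> ('v \<Rightarrow> 'v \<Rightarrow> real) \<Rightarrow> bool" where
  "is_distance V d \<longleftrightarrow>
     (\<forall>x\<in>V. \<forall>y\<in>V. d x y \<ge> 0 \<and> (d x y = 0 \<longleftrightarrow> x = y) \<and> d x y = d y x) \<and>
     (\<forall>x\<in>V. \<forall>y\<in>V. \<forall>z\<in>V. d x z \<le> d x y + d y z)"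

definition complete_distance :: "'v set \<Rightarrow> ('v \<Rightarrow> 'v \<Rightarrow> real) \<Rightarrow> bool" where
  "complete_distance V d \<longleftrightarrow>
     (\<forall>s::nat \<Rightarrow> 'v. (\<forall>n. s n \<in> V) \<longrightarrow>
        (\<forall>e>0. \<exists>N. \<forall>m\<ge>N. \<forall>n\<ge>N. d (s m) (s n) < e) \<longrightarrow>
        (\<exists>l\<in>V. (\<lambda>n. d (s n) l) \<longlonglongrightarrow> 0))"

text \<open>Measures on V (discrete sigma-algebra) are represented by their weight functions
  \<open>'v \<Rightarrow> real\<close>, vanishing outside V.\<close>
definition coupling :: "'v set \<Rightarrow> ('v \<Rightarrow> real) \<Rightarrow> ('v \<Rightarrow> real) \<Rightarrow> ('v \<times> 'v \<Rightarrow> real) \<Rightarrow> bool" where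
  "coupling V p q \<pi> \<longleftrightarrow>
     (\<forall>a b. \<pi> (a, b) \<ge> 0) \<and> (\<forall>a b. a \<notin> V \<or> b \<notin> V \<longrightarrow> \<pi> (a, b) = 0) \<and>
     (\<forall>a\<in>V. ((\<lambda>b. \<pi> (a, b)) has_sum p a) V) \<and>
     (\<forall>b\<in>V. ((\<lambda>a. \<pi> (a, b)) has_sum q b) V)"

definition W1 :: "'v set \<Rightarrow> ('v \<Rightarrow> 'v \<Rightarrow> real) \<Rightarrow> ('v \<Rightarrow> real) \<Rightarrow> ('v \<Rightarrow> real) \<Rightarrow> real" where
  "W1 V d p q = (INF \<pi> \<in> {\<pi>. coupling V p q \<pi> \<and> (\<lambda>(a, b). d a b * \<pi> (a, b)) summable_on (V \<times> V)}.
                   infsum (\<lambda>(a, b). d a b * \<pi> (a, b)) (V \<times> V))"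

definition dirac :: "'v \<Rightarrow> 'v \<Rightarrow> real" where
  "dirac z v = (if v = z then 1 else 0)"

definition lazy_walk :: "('v \<Rightarrow> 'v \<Rightarrow> real) \<Rightarrow> real \<Rightarrow> 'v \<Rightarrow> 'v \<Rightarrow> real" where
  "lazy_walk \<mu> \<epsilon> z v = dirac z v + \<epsilon> * \<mu> z v"

definition ORic_eps :: "'v set \<Rightarrow> ('v \<Rightarrow> 'v \<Rightarrow> real) \<Rightarrow> ('v \<Rightarrow> 'v \<Rightarrow> real) \<Rightarrow> real \<Rightarrow> 'v \<Rightarrow> 'v \<Rightarrow> real" where
  "ORic_eps V d \<mu> \<epsilon> x y = 1 - W1 V d (lazy_walk \<mu> \<epsilon> x) (lazy_walk \<mu> \<epsilon> y) / d x y"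

end

theory Submission
  imports Defs
begin

lemma has_sum_single_pt:
  fixes c :: real
  shows "w \<in> A \<Longrightarrow> ((\<lambda>a. if a = w then c else 0) has_sum c) A"
  by (rule has_sum_finite_neutralI[of "{w}"]) auto

lemma mono_lim:
  fixes g :: "real \<Rightarrow> real"
  assumes mono: "\<And>a b. 0 < a \<Longrightarrow> a < b \<Longrightarrow> b \<le> 1 \<Longrightarrow> g b \<le> g a"
    and bnd: "\<And>e. 0 < e \<Longrightarrow> e \<le> 1 \<Longrightarrow> g e \<le> C"
  shows "\<exists>L. (g \<longlongrightarrow> L) (at_right 0)"
proof -
  define L where "L = Sup (g ` {0<..1})"
  have ne: "g ` {0<..1} \<noteq> {}" by auto
  have bdd: "bdd_above (g ` {0<..1})" using bnd by (auto intro!: bdd_aboveI2)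
  have le: "g e \<le> L" if "0 < e" "e \<le> 1" for e
    unfolding L_def using that bdd by (intro cSup_upper) auto
  have "(g \<longlongrightarrow> L) (at_right 0)"
  proof (rule order_tendstoI)
    fix a assume "a < L"
    then obtain e0 where e0: "e0 \<in> {0<..1}" "a < g e0"
      unfolding L_def using less_cSup_iff[OF ne bdd] by auto
    show "eventually (\<lambda>e. a < g e) (at_right 0)"
      unfolding eventually_at_right_field
    proof (intro exI[of _ e0] conjI allI impI)
      show "0 < e0" using e0 by auto
      fix e assume "0 < e" "e < e0"
      then have "g e0 \<le> g e" using mono[of e e0] e0 by auto
      then show "a < g e" using e0 by auto
    qed
  next
    fix a assume "L < a"
    show "eventually (\<lambda>e. g e < a) (at_right 0)"
      unfolding eventually_at_right_field
    proof (intro exI[of _ 1] conjI allI impI)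
      fix e :: real assume "0 < e" "e < 1"
      then show "g e < a" using le[of e] \<open>L < a\<close> by auto
    qed simp
  qed
  then show ?thesis by blast
qed

locale rw_setting =
  fixes V :: "'v set" and d :: "'v \<Rightarrow> 'v \<Rightarrow> real"
    and \<mu> :: "'v \<Rightarrow> 'v \<Rightarrow> real" and x y :: 'v
  assumes dist: "is_distance V d"
    and supp: "\<And>z v. z \<in> V \<Longrightarrow> v \<notin> V \<Longrightarrow> \<mu> z v = 0"
    and finite_var: "\<And>z. z \<in> V \<Longrightarrow> (\<lambda>v. \<bar>\<mu> z v\<bar>) summable_on V"
    and mass_zero: "\<And>z. z \<in> V \<Longrightarrow> (\<mu> z has_sum 0) V"
    and first_moment: "\<And>z. z \<in> V \<Longrightarrow> (\<lambda>v. d z v * \<bar>\<mu> z v\<bar>) summable_on V"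
    and prob: "\<And>z \<epsilon> v. z \<in> V \<Longrightarrow> \<epsilon> \<in> {0..1} \<Longrightarrow> v \<in> V \<Longrightarrow> lazy_walk \<mu> \<epsilon> z v \<ge> 0"
    and xV: "x \<in> V" and yV: "y \<in> V" and xy: "x \<noteq> y"
begin

lemma dist_all: "\<forall>a\<in>V. \<forall>b\<in>V. d a b \<ge> 0 \<and> (d a b = 0 \<longleftrightarrow> a = b) \<and> d a b = d b a"
  using dist unfolding is_distance_def by blast
lemma dist_tri: "\<forall>a\<in>V. \<forall>b\<in>V. \<forall>c\<in>V. d a c \<le> d a b + d b c"
  using dist unfolding is_distance_def by blast
lemma d_nonneg: "a \<in> V \<Longrightarrow> b \<in> V \<Longrightarrow> d a b \<ge> 0"
  using dist_all by blast
lemma d_refl: "a \<in> V \<Longrightarrow> d a a = 0"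
  using dist_all by blast
lemma d_sym: "a \<in> V \<Longrightarrow> b \<in> V \<Longrightarrow> d a b = d b a"
  using dist_all by blast
lemma d_tri: "a \<in> V \<Longrightarrow> b \<in> V \<Longrightarrow> c \<in> V \<Longrightarrow> d a c \<le> d a b + d b c"
  using dist_tri by blast
lemma d_pos: "d x y > 0"
proof -
  have "d x y \<ge> 0" "d x y \<noteq> 0" using dist_all xV yV xy by blast+
  then show ?thesis by linarith
qed

lemma dmu_summable:
  assumes z: "z \<in> V" and w: "w \<in> V"
  shows "(\<lambda>a. d a w * \<mu> z a) summable_on V"
proof -
  have s: "(\<lambda>a. d z a * \<bar>\<mu> z a\<bar> + d z w * \<bar>\<mu> z a\<bar>) summable_on V"
    by (rule summable_on_add[OF first_moment[OF z] summable_on_cmult_right[OF finite_var[OF z]]])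
  have "(\<lambda>a. \<bar>d a w * \<mu> z a\<bar>) summable_on V"
  proof (rule summable_on_comparison_test[OF s])
    fix a assume a: "a \<in> V"
    have "\<bar>d a w * \<mu> z a\<bar> = d a w * \<bar>\<mu> z a\<bar>"
      using d_nonneg[OF a w] by (simp add: abs_mult)
    also have "\<dots> \<le> (d z a + d z w) * \<bar>\<mu> z a\<bar>"
      using d_tri[OF a z w] d_sym[OF a z] by (intro mult_right_mono) auto
    finally show "\<bar>d a w * \<mu> z a\<bar> \<le> d z a * \<bar>\<mu> z a\<bar> + d z w * \<bar>\<mu> z a\<bar>"
      by (simp add: algebra_simps)
  qed simp
  then show ?thesis
    unfolding summable_on_iff_abs_summable_on_real[of "\<lambda>a. d a w * \<mu> z a"] by simp
qed

definition M :: "'v \<Rightarrow> 'v \<Rightarrow> real" where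
  "M z w = infsum (\<lambda>a. d a w * \<mu> z a) V"

lemma lazy_has_sum: "z \<in> V \<Longrightarrow> (lazy_walk \<mu> e z has_sum 1) V"
proof -
  assume z: "z \<in> V"
  have "((\<lambda>a. (if a = z then 1 else 0) + e * \<mu> z a) has_sum (1 + e * 0)) V"
    by (rule has_sum_add[OF has_sum_single_pt[OF z] has_sum_cmult_right[OF mass_zero[OF z]]])
  then show ?thesis
    by (simp add: lazy_walk_def[abs_def] dirac_def)
qed

lemma lazy_moment:
  assumes z: "z \<in> V" and w: "w \<in> V"
  shows "((\<lambda>a. d a w * lazy_walk \<mu> e z a) has_sum (d z w + e * M z w)) V"
proof -
  have "((\<lambda>a. (if a = z then d z w else 0) + e * (d a w * \<mu> z a)) has_sum (d z w + e * M z w)) V"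
    unfolding M_def
    by (rule has_sum_add[OF has_sum_single_pt[OF z] has_sum_cmult_right[OF has_sum_infsum[OF dmu_summable[OF z w]]]])
  then show ?thesis
    by (rule has_sum_cong[THEN iffD1, rotated])
       (auto simp: lazy_walk_def dirac_def algebra_simps)
qed

lemma lazy_out: "z \<in> V \<Longrightarrow> v \<notin> V \<Longrightarrow> lazy_walk \<mu> e z v = 0"
  using supp by (auto simp: lazy_walk_def dirac_def)


lemma marg:
  fixes \<pi> :: "'v \<times> 'v \<Rightarrow> real" and f p :: "'v \<Rightarrow> real"
  assumes nn: "\<And>a b. \<pi> (a,b) \<ge> 0"
    and rows: "\<And>a. a \<in> V \<Longrightarrow> ((\<lambda>b. \<pi> (a,b)) has_sum p a) V"
    and fnn: "\<And>a. a \<in> V \<Longrightarrow> f a \<ge> 0"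
    and fs: "((\<lambda>a. f a * p a) has_sum S) V"
  shows "((\<lambda>(a,b). f a * \<pi> (a,b)) has_sum S) (V \<times> V)"
proof -
  have r: "((\<lambda>b. f a * \<pi> (a,b)) has_sum f a * p a) V" if "a \<in> V" for a
    using has_sum_cmult_right[OF rows[OF that], of "f a"] by simp
  have sm: "(\<lambda>(a,b). f a * \<pi> (a,b)) summable_on (V \<times> V)"
  proof (rule summable_on_SigmaI[where g="\<lambda>a. f a * p a"])
    show "((\<lambda>b. (\<lambda>(a,b). f a * \<pi> (a,b)) (a, b)) has_sum f a * p a) V" if "a \<in> V" for a
      using r[OF that] by simp
    show "(\<lambda>a. f a * p a) summable_on V" using fs by (simp add: has_sum_iff)
    show "0 \<le> (\<lambda>(a,b). f a * \<pi> (a,b)) (a, b)" if "a \<in> V" "b \<in> V" for a b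
      using fnn[OF that(1)] nn[of a b] by simp
  qed
  show ?thesis
  proof (rule has_sum_SigmaI[where g="\<lambda>a. f a * p a"])
    show "((\<lambda>b. (\<lambda>(a,b). f a * \<pi> (a,b)) (a, b)) has_sum f a * p a) V" if "a \<in> V" for a
      using r[OF that] by simp
  qed (use fs sm in auto)
qed

definition cost :: "('v \<times> 'v \<Rightarrow> real) \<Rightarrow> real" where
  "cost \<pi> = infsum (\<lambda>(a, b). d a b * \<pi> (a, b)) (V \<times> V)"

definition Cpl :: "real \<Rightarrow> ('v \<times> 'v \<Rightarrow> real) set" where
  "Cpl e = {\<pi>. coupling V (lazy_walk \<mu> e x) (lazy_walk \<mu> e y) \<pi> \<and>
      (\<lambda>(a, b). d a b * \<pi> (a, b)) summable_on (V \<times> V)}"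

lemma W_eq: "W1 V d (lazy_walk \<mu> e x) (lazy_walk \<mu> e y) = Inf (cost ` Cpl e)"
  by (simp add: W1_def cost_def Cpl_def)

lemma lower:
  assumes e: "e \<in> {0..1}" and pi: "\<pi> \<in> Cpl e"
  shows "cost \<pi> \<ge> d x y + e * (M x y - M y y)"
proof -
  have nn: "\<And>a b. \<pi> (a,b) \<ge> 0"
    and rows: "\<And>a. a \<in> V \<Longrightarrow> ((\<lambda>b. \<pi> (a,b)) has_sum lazy_walk \<mu> e x a) V"
    and cols: "\<And>b. b \<in> V \<Longrightarrow> ((\<lambda>a. \<pi> (a,b)) has_sum lazy_walk \<mu> e y b) V"
    and sm: "(\<lambda>(a, b). d a b * \<pi> (a, b)) summable_on (V \<times> V)"
    using pi unfolding Cpl_def coupling_def by auto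
  have h1: "((\<lambda>(a,b). d a y * \<pi> (a,b)) has_sum (d x y + e * M x y)) (V \<times> V)"
    by (rule marg[OF nn rows d_nonneg[OF _ yV] lazy_moment[OF xV yV]])
  have h2': "((\<lambda>(b,a). d b y * (\<lambda>(b,a). \<pi> (a,b)) (b,a)) has_sum (d y y + e * M y y)) (V \<times> V)"
    by (rule marg[where p="lazy_walk \<mu> e y"]) (use nn cols d_nonneg[OF _ yV] lazy_moment[OF yV yV] in auto)
  have h2: "((\<lambda>(a,b). d b y * \<pi> (a,b)) has_sum (d y y + e * M y y)) (V \<times> V)"
    using has_sum_swap[where f="\<lambda>(b,a). d b y * \<pi> (a,b)" and S="d y y + e * M y y" and A=V and B=V] h2'
    by (simp add: case_prod_unfold)
  have h3: "((\<lambda>p. (\<lambda>(a,b). d a y * \<pi> (a,b)) p + - (\<lambda>(a,b). d b y * \<pi> (a,b)) p) has_sum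
      ((d x y + e * M x y) + - (d y y + e * M y y))) (V \<times> V)"
    by (rule has_sum_add[OF h1 has_sum_uminus[THEN iffD2]]) (use h2 in \<open>simp add: add.commute\<close>)
  have "(d x y + e * M x y) + - (d y y + e * M y y) \<le> cost \<pi>"
    unfolding cost_def
  proof (rule has_sum_mono[OF h3 has_sum_infsum[OF sm]])
    fix p assume "p \<in> V \<times> V"
    then obtain a b where p: "p = (a,b)" "a \<in> V" "b \<in> V" by auto
    have "d a y - d b y \<le> d a b" using d_tri[OF p(2) p(3) yV] by simp
    then have "(d a y - d b y) * \<pi> (a,b) \<le> d a b * \<pi> (a,b)"
      using nn[of a b] by (rule mult_right_mono)
    then show "(\<lambda>(a,b). d a y * \<pi> (a,b)) p + - (\<lambda>(a,b). d b y * \<pi> (a,b)) p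
        \<le> (\<lambda>(a,b). d a b * \<pi> (a,b)) p"
      using p by (simp add: algebra_simps)
  qed
  then show ?thesis using d_refl[OF yV] by (simp add: algebra_simps)
qed


lemma lazy_nn: "e \<in> {0..1} \<Longrightarrow> z \<in> V \<Longrightarrow> lazy_walk \<mu> e z v \<ge> 0"
  by (cases "v \<in> V") (auto simp: prob lazy_out)

lemma nonempty:
  assumes e: "e \<in> {0..1}"
  shows "Cpl e \<noteq> {}"
proof -
  define p where "p = lazy_walk \<mu> e x"
  define q where "q = lazy_walk \<mu> e y"
  define D where "D = d x y"
  define c where "c = d y y + e * M y y"
  define \<pi> where "\<pi> = (\<lambda>(a,b). if a \<in> V \<and> b \<in> V then p a * q b else 0)"
  have pnn: "\<And>a. p a \<ge> 0" and qnn: "\<And>a. q a \<ge> 0"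
    unfolding p_def q_def using lazy_nn[OF e xV] lazy_nn[OF e yV] by auto
  have ps: "(p has_sum 1) V" and qs: "(q has_sum 1) V"
    unfolding p_def q_def using lazy_has_sum xV yV by auto
  have nn: "\<And>a b. \<pi> (a,b) \<ge> 0" unfolding \<pi>_def using pnn qnn by simp
  have rows: "((\<lambda>b. \<pi> (a,b)) has_sum p a) V" if a: "a \<in> V" for a
  proof -
    have "((\<lambda>b. p a * q b) has_sum p a) V" using has_sum_cmult_right[OF qs, of "p a"] by simp
    then show ?thesis by (rule has_sum_cong[THEN iffD1, rotated]) (use a in \<open>simp add: \<pi>_def\<close>)
  qed
  have cols: "((\<lambda>a. \<pi> (a,b)) has_sum q b) V" if b: "b \<in> V" for b
  proof -
    have "((\<lambda>a. q b * p a) has_sum q b) V" using has_sum_cmult_right[OF ps, of "q b"] by simp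
    then show ?thesis by (rule has_sum_cong[THEN iffD1, rotated]) (use b in \<open>simp add: \<pi>_def mult.commute\<close>)
  qed
  define H where "H = (\<lambda>(a,b). (d a x + D) * p a * q b + p a * (d b y * q b))"
  have Hrow: "((\<lambda>b. H (a,b)) has_sum ((d a x + D) * p a * 1 + p a * c)) V" if "a \<in> V" for a
  proof -
    have "((\<lambda>b. (d a x + D) * p a * q b + p a * (d b y * q b)) has_sum ((d a x + D) * p a * 1 + p a * c)) V"
      by (rule has_sum_add[OF has_sum_cmult_right[OF qs] has_sum_cmult_right[OF lazy_moment[OF yV yV, where e=e, folded q_def c_def]]])
    then show ?thesis by (simp add: H_def)
  qed
  have gsum: "(\<lambda>a. (d a x + D) * p a * 1 + p a * c) summable_on V"
  proof -
    have s1: "(\<lambda>a. d a x * p a) summable_on V"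
      using lazy_moment[OF xV xV, where e=e, folded p_def] by (simp add: has_sum_iff)
    have s2: "(\<lambda>a. (D + c) * p a) summable_on V"
      by (rule summable_on_cmult_right) (use ps in \<open>simp add: has_sum_iff\<close>)
    have "(\<lambda>a. d a x * p a + (D + c) * p a) summable_on V"
      by (rule summable_on_add[OF s1 s2])
    then show ?thesis by (simp add: algebra_simps)
  qed
  have Hsum: "H summable_on (V \<times> V)"
  proof (rule summable_on_SigmaI[OF _ gsum])
    show "((\<lambda>b. H (a, b)) has_sum ((d a x + D) * p a * 1 + p a * c)) V" if "a \<in> V" for a
      using Hrow[OF that] .
    show "0 \<le> H (a, b)" if "a \<in> V" "b \<in> V" for a b
      using d_nonneg[OF that(1) xV] d_nonneg[OF that(2) yV] d_pos pnn[of a] qnn[of b]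
      unfolding H_def D_def by simp
  qed
  have csum: "(\<lambda>(a, b). d a b * \<pi> (a, b)) summable_on (V \<times> V)"
  proof (rule summable_on_comparison_test[OF Hsum])
    fix ab assume "ab \<in> V \<times> V"
    then obtain a b where ab: "ab = (a,b)" "a \<in> V" "b \<in> V" by auto
    have "d a b \<le> d a x + D + d b y"
      using d_tri[OF ab(2) xV ab(3)] d_tri[OF xV yV ab(3)] d_sym[OF ab(3) yV] d_sym[OF ab(2) xV]
      unfolding D_def by linarith
    then have "d a b * (p a * q b) \<le> (d a x + D + d b y) * (p a * q b)"
      by (rule mult_right_mono) (use pnn qnn in simp)
    then show "(\<lambda>(a, b). d a b * \<pi> (a, b)) ab \<le> H ab"
      using ab unfolding H_def \<pi>_def by (simp add: algebra_simps)
    show "0 \<le> (\<lambda>(a, b). d a b * \<pi> (a, b)) ab"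
      using ab nn d_nonneg by simp
  qed
  have "\<pi> \<in> Cpl e"
    unfolding Cpl_def coupling_def
    using nn rows cols csum by (auto simp: \<pi>_def p_def q_def)
  then show ?thesis by blast
qed


lemma delta_row:
  assumes a: "a \<in> V"
  shows "((\<lambda>b. if a = x \<and> b = y then 1 else 0) has_sum dirac x a) V"
proof (cases "a = x")
  case True
  then show ?thesis using has_sum_single_pt[OF yV, of 1] by (simp add: dirac_def)
next
  case False
  then show ?thesis by (simp add: dirac_def)
qed

lemma delta_col:
  assumes b: "b \<in> V"
  shows "((\<lambda>a. if a = x \<and> b = y then 1 else 0) has_sum dirac y b) V"
proof (cases "b = y")
  case True
  then show ?thesis using has_sum_single_pt[OF xV, of 1] by (simp add: dirac_def)
next
  case False
  then show ?thesis by (simp add: dirac_def)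
qed

lemma mixture:
  assumes e2: "0 < e2" and e12: "e2 < e1" and e1: "e1 \<le> 1" and pi: "\<pi> \<in> Cpl e1"
  defines "t \<equiv> e2 / e1"
  defines "\<pi>' \<equiv> (\<lambda>(a,b). (1 - t) * (if a = x \<and> b = y then 1 else 0) + t * \<pi> (a,b))"
  shows "\<pi>' \<in> Cpl e2" "cost \<pi>' = (1 - t) * d x y + t * cost \<pi>"
proof -
  have t0: "0 < t" and t1: "t < 1" using e2 e12 unfolding t_def by auto
  have te: "t * e1 = e2" using e2 e12 unfolding t_def by simp
  have nn: "\<And>a b. \<pi> (a,b) \<ge> 0"
    and out: "\<And>a b. a \<notin> V \<or> b \<notin> V \<Longrightarrow> \<pi> (a,b) = 0"
    and rows: "\<And>a. a \<in> V \<Longrightarrow> ((\<lambda>b. \<pi> (a,b)) has_sum lazy_walk \<mu> e1 x a) V"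
    and cols: "\<And>b. b \<in> V \<Longrightarrow> ((\<lambda>a. \<pi> (a,b)) has_sum lazy_walk \<mu> e1 y b) V"
    and sm: "(\<lambda>(a, b). d a b * \<pi> (a, b)) summable_on (V \<times> V)"
    using pi unfolding Cpl_def coupling_def by auto
  have mix: "(1 - t) * dirac z v + t * lazy_walk \<mu> e1 z v = lazy_walk \<mu> e2 z v" for z v
    using te by (simp add: lazy_walk_def algebra_simps)
  have nn': "\<pi>' (a,b) \<ge> 0" for a b
    unfolding \<pi>'_def using t0 t1 nn[of a b] by simp
  have out': "\<pi>' (a,b) = 0" if "a \<notin> V \<or> b \<notin> V" for a b
    unfolding \<pi>'_def using out[OF that] that xV yV by auto
  have rows': "((\<lambda>b. \<pi>' (a,b)) has_sum lazy_walk \<mu> e2 x a) V" if a: "a \<in> V" for a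
    using has_sum_add[OF has_sum_cmult_right[OF delta_row[OF a], of "1 - t"]
        has_sum_cmult_right[OF rows[OF a], of t]]
    unfolding mix \<pi>'_def by simp
  have cols': "((\<lambda>a. \<pi>' (a,b)) has_sum lazy_walk \<mu> e2 y b) V" if b: "b \<in> V" for b
    using has_sum_add[OF has_sum_cmult_right[OF delta_col[OF b], of "1 - t"]
        has_sum_cmult_right[OF cols[OF b], of t]]
    unfolding mix \<pi>'_def by simp
  have dsum: "((\<lambda>p. if p = (x,y) then d x y else 0) has_sum d x y) (V \<times> V)"
    by (rule has_sum_single_pt) (use xV yV in auto)
  have cs: "((\<lambda>(a,b). d a b * \<pi>' (a,b)) has_sum ((1 - t) * d x y + t * cost \<pi>)) (V \<times> V)"
  proof -
    have "((\<lambda>p. (1 - t) * (if p = (x,y) then d x y else 0) + t * (\<lambda>(a, b). d a b * \<pi> (a, b)) p)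
        has_sum ((1 - t) * d x y + t * cost \<pi>)) (V \<times> V)"
      unfolding cost_def
      by (rule has_sum_add[OF has_sum_cmult_right[OF dsum] has_sum_cmult_right[OF has_sum_infsum[OF sm]]])
    then show ?thesis
      by (rule has_sum_cong[THEN iffD1, rotated]) (auto simp: \<pi>'_def algebra_simps split: if_splits)
  qed
  show "\<pi>' \<in> Cpl e2"
    unfolding Cpl_def coupling_def using nn' out' rows' cols' cs
    by (auto simp: has_sum_iff)
  show "cost \<pi>' = (1 - t) * d x y + t * cost \<pi>"
    using cs unfolding cost_def by (simp add: has_sum_iff)
qed


definition W :: "real \<Rightarrow> real" where "W e = Inf (cost ` Cpl e)"

lemma bddb: "e \<in> {0..1} \<Longrightarrow> bdd_below (cost ` Cpl e)"
  using lower by (auto intro!: bdd_belowI2)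

lemma W_lower: "e \<in> {0..1} \<Longrightarrow> W e \<ge> d x y + e * (M x y - M y y)"
  unfolding W_def using nonempty lower by (auto intro!: cInf_greatest)

lemma W_mono:
  assumes e2: "0 < e2" and e12: "e2 < e1" and e1: "e1 \<le> 1"
  shows "W e2 \<le> (1 - e2/e1) * d x y + (e2/e1) * W e1"
proof -
  define t where "t = e2 / e1"
  have t0: "0 < t" using e2 e12 unfolding t_def by auto
  have "(W e2 - (1 - t) * d x y) / t \<le> W e1"
    unfolding W_def[of e1]
  proof (rule cInf_greatest)
    show "cost ` Cpl e1 \<noteq> {}" using nonempty[of e1] e1 e2 e12 by auto
    fix c assume "c \<in> cost ` Cpl e1"
    then obtain \<pi> where pi: "\<pi> \<in> Cpl e1" "c = cost \<pi>" by auto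
    note m = mixture[OF e2 e12 e1 pi(1), folded t_def]
    have "W e2 \<le> cost (\<lambda>(a,b). (1 - t) * (if a = x \<and> b = y then 1 else 0) + t * \<pi> (a,b))"
      unfolding W_def using m(1) bddb[of e2] e2 e12 e1 by (intro cInf_lower) auto
    then have "W e2 \<le> (1 - t) * d x y + t * c" using m(2) pi(2) by simp
    then show "(W e2 - (1 - t) * d x y) / t \<le> c" using t0 by (simp add: field_simps)
  qed
  then show ?thesis using t0 unfolding t_def[symmetric] by (simp add: field_simps)
qed

lemma final: "\<exists>L. ((\<lambda>e. (1 - W e / d x y) / e) \<longlongrightarrow> L) (at_right 0)"
proof (rule mono_lim)
  have D: "d x y > 0" by (rule d_pos)
  fix e :: real assume e: "0 < e" "e \<le> 1"
  have "W e \<ge> d x y + e * (M x y - M y y)" using W_lower e by auto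
  then have "d x y - W e \<le> e * (M y y - M x y)" by (simp add: algebra_simps)
  then have "(d x y - W e) / d x y \<le> e * (M y y - M x y) / d x y"
    using D by (intro divide_right_mono) auto
  then have "1 - W e / d x y \<le> e * (M y y - M x y) / d x y"
    using D by (simp add: diff_divide_distrib del: times_divide_eq_left times_divide_eq_right)
  then have "(1 - W e / d x y) / e \<le> (e * (M y y - M x y) / d x y) / e"
    using e by (intro divide_right_mono) auto
  then show "(1 - W e / d x y) / e \<le> (M y y - M x y) / d x y"
    using e by simp
next
  have D: "d x y > 0" by (rule d_pos)
  fix a b :: real assume ab: "0 < a" "a < b" "b \<le> 1"
  define t where "t = a / b"
  have t0: "0 < t" using ab unfolding t_def by auto
  have "W a \<le> (1 - t) * d x y + t * W b" using W_mono[OF ab] unfolding t_def .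
  then have "W a / d x y \<le> ((1 - t) * d x y + t * W b) / d x y"
    using D by (intro divide_right_mono) auto
  also have "\<dots> = (1 - t) + t * (W b / d x y)"
    using D by (simp add: add_divide_distrib)
  finally have "t * (1 - W b / d x y) \<le> 1 - W a / d x y"
    by (simp add: algebra_simps)
  then have "t * (1 - W b / d x y) / a \<le> (1 - W a / d x y) / a"
    using ab by (intro divide_right_mono) auto
  moreover have "t * (1 - W b / d x y) / a = (1 - W b / d x y) / b"
    using ab unfolding t_def by (simp add: field_simps)
  ultimately show "(1 - W b / d x y) / b \<le> (1 - W a / d x y) / a" by simp
qed

end

theorem mainTheorem9:
  fixes V :: "'v set" and E :: "'v \<Rightarrow> 'v \<Rightarrow> bool" and d :: "'v \<Rightarrow> 'v \<Rightarrow> real"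
    and \<mu> :: "'v \<Rightarrow> 'v \<Rightarrow> real" and x y :: 'v
  assumes graph: "locally_finite_graph V E"
    and dist: "is_distance V d" and compl: "complete_distance V d"
    and supp: "\<And>z v. z \<in> V \<Longrightarrow> v \<notin> V \<Longrightarrow> \<mu> z v = 0"
    and finite_var: "\<And>z. z \<in> V \<Longrightarrow> (\<lambda>v. \<bar>\<mu> z v\<bar>) summable_on V"
    and mass_zero: "\<And>z. z \<in> V \<Longrightarrow> (\<mu> z has_sum 0) V"
    and first_moment: "\<And>z. z \<in> V \<Longrightarrow> (\<lambda>v. d z v * \<bar>\<mu> z v\<bar>) summable_on V"
    and prob: "\<And>z \<epsilon> v. z \<in> V \<Longrightarrow> \<epsilon> \<in> {0..1} \<Longrightarrow> v \<in> V \<Longrightarrow> lazy_walk \<mu> \<epsilon> z v \<ge> 0"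
    and xy: "x \<in> V" "y \<in> V" "x \<noteq> y"
  shows "\<exists>L::real. ((\<lambda>\<epsilon>. ORic_eps V d \<mu> \<epsilon> x y / \<epsilon>) \<longlongrightarrow> L) (at_right 0)"
proof -
  interpret rw_setting V d \<mu> x y
    by (unfold_locales) (use assms in auto)
  obtain L where L: "((\<lambda>e. (1 - W e / d x y) / e) \<longlongrightarrow> L) (at_right 0)" using final by blast
  have "((\<lambda>\<epsilon>. ORic_eps V d \<mu> \<epsilon> x y / \<epsilon>) \<longlongrightarrow> L) (at_right 0)"
    using L by (simp add: ORic_eps_def W_eq W_def)
  then show ?thesis by blast
qed

end
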